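(* Let $w:=3/\sqrt{2}$, and for $t\in[0,w]$ let $x:=-t+wi$ and $X:=1/x$. Define $$G_5:=X+qX^2+q^3X^3+q^6X^4+q^{10}X^5,\qquad G_*:=\sum_{j=5}^{\infty}q^{j(j+1)/2}X^{j+1}.$$ Then for all $(q,t)\in[0.6,1]\times[0,w]$ one has $|G_*|<0.0208$ and $|G_5|>0.147$.
   Context: Note $G_5+G_*=\sum_{j=-\infty}^{-1}q^{j(j+1)/2}x^j$. *)

theory Defs
  imports Complex_Main
begin

definition w_const :: real where "w_const = 3 / sqrt 2"

definition Xpt :: "real \<Rightarrow> complex" where
  "Xpt t = 1 / Complex (- t) w_const"

definition G5 :: "real \<Rightarrow> complex \<Rightarrow> complex" where
  "G5 q X = X + of_real q * X^2 + of_real (q^3) * X^3 + of_real (q^6) * X^4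
            + of_real (q^10) * X^5"

text \<open>G_* = sum over j \<ge> 5 of q^(j(j+1)/2) X^(j+1); reindexed with j = n + 5.\<close>
definition Gstar :: "real \<Rightarrow> complex \<Rightarrow> complex" where
  "Gstar q X = (\<Sum>n. of_real (q ^ (((n + 5) * (n + 6)) div 2)) * X ^ (n + 6))"

end

theory Submission
  imports Defs
begin

lemma w_facts: "w_const > 0" "w_const ^ 2 = 9/2" "w_const \<ge> 2.1213"
proof -
  show "w_const > 0" unfolding w_const_def by simp
  show sq: "w_const ^ 2 = 9/2" unfolding w_const_def by (simp add: power_divide)
  show "w_const \<ge> 2.1213"
  proof (rule ccontr)
    assume "\<not> ?thesis"
    hence "w_const < 2.1213" by simp
    hence "w_const ^ 2 < 2.1213 ^ 2" using \<open>w_const > 0\<close>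
      by (intro power_strict_mono) auto
    thus False using sq by (simp add: power2_eq_square)
  qed
qed

lemma r_facts:
  assumes "0 \<le> t" "t \<le> w_const"
  shows "cmod (Xpt t) ^ 2 = 1 / (t^2 + w_const^2)"
    "cmod (Xpt t) \<ge> 1/3" "cmod (Xpt t) \<le> 0.4715"
proof -
  let ?x = "Complex (- t) w_const"
  have nx: "cmod ?x ^ 2 = t^2 + w_const^2" by (simp add: cmod_power2)
  have X: "Xpt t = 1 / ?x" by (simp add: Xpt_def)
  have x0: "cmod ?x > 0" using w_facts(1) by (auto simp: Complex_eq_0)
  show r2: "cmod (Xpt t) ^ 2 = 1 / (t^2 + w_const^2)"
    unfolding X using nx by (simp add: norm_divide power_divide)
  have t2: "t^2 \<le> w_const^2" using assms by (intro power_mono) auto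
  have D1: "t^2 + w_const^2 \<ge> 9/2" using w_facts(2) by simp
  have D2: "t^2 + w_const^2 \<le> 9" using w_facts(2) t2 by simp
  have a0: "1 / (t^2 + w_const^2) \<ge> 1/9" using D2 D1
    by (simp add: divide_simps)
  have b0: "1 / (t^2 + w_const^2) \<le> 2/9" using D2 D1
    by (simp add: divide_simps)
  have a: "cmod (Xpt t) ^ 2 \<ge> 1/9" using r2 a0 by simp
  have b: "cmod (Xpt t) ^ 2 \<le> 2/9" using r2 b0 by simp
  show "cmod (Xpt t) \<ge> 1/3"
  proof (rule ccontr)
    assume "\<not> ?thesis"
    hence "cmod (Xpt t) ^ 2 < (1/3)^2" by (intro power_strict_mono) auto
    thus False using a by (simp add: power2_eq_square)
  qed
  show "cmod (Xpt t) \<le> 0.4715"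
  proof (rule ccontr)
    assume "\<not> ?thesis"
    hence "0.4715^2 < cmod (Xpt t) ^ 2" by (intro power_strict_mono) auto
    thus False using b by (simp add: power2_eq_square)
  qed
qed

lemma poly_bound:
  fixes r w :: real
  assumes "1/3 \<le> r" "r \<le> 0.4715" "w \<ge> 2.1213"
  shows "w * r^2 - r^3 - r^4 - r^5 > 0.147"
proof -
  have e: "w * r^2 - r^3 - r^4 - r^5 = r^2 * (w - r - r^2 - r^3)"
    by (simp add: algebra_simps power2_eq_square power3_eq_cube power_numeral_reduce)
  show ?thesis
  proof (cases "r \<le> 0.36")
    case True
    have "r^2 \<ge> 1/9" using assms(1) power_mono[of "1/3" r 2] by (simp add: power2_eq_square)
    moreover have "r^2 \<le> 0.1296" using True assms(1) power_mono[of r "0.36" 2] by (simp add: power2_eq_square)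
    moreover have "r^3 \<le> 0.046656" using True assms(1) power_mono[of r "0.36" 3] by (simp add: power3_eq_cube)
    moreover have "w - r - r^2 - r^3 \<ge> 2.1213 - 0.36 - 0.1296 - 0.046656"
      using calculation True assms by linarith
    ultimately have "r^2 * (w - r - r^2 - r^3) \<ge> 1/9 * (2.1213 - 0.36 - 0.1296 - 0.046656)"
      by (intro mult_mono) (auto simp: power3_eq_cube power2_eq_square)
    thus ?thesis using e by simp
  next
    case False
    have "r^2 \<ge> 0.1296" using False power_mono[of "0.36" r 2] by (simp add: power2_eq_square)
    moreover have "r^2 \<le> 0.22231225" using assms power_mono[of r "0.4715" 2] by (simp add: power2_eq_square)
    moreover have "r^3 \<le> 0.104820225875" using assms power_mono[of r "0.4715" 3] by (simp add: power3_eq_cube)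
    moreover have "w - r - r^2 - r^3 \<ge> 2.1213 - 0.4715 - 0.22231225 - 0.104820225875"
      using calculation False assms by linarith
    ultimately have "r^2 * (w - r - r^2 - r^3) \<ge> 0.1296 * (2.1213 - 0.4715 - 0.22231225 - 0.104820225875)"
      by (intro mult_mono) (auto simp: power3_eq_cube power2_eq_square)
    thus ?thesis using e by simp
  qed
qed

lemma G5_bound:
  assumes "0.6 \<le> q" "q \<le> 1" "0 \<le> t" "t \<le> w_const"
  shows "cmod (G5 q (Xpt t)) > 0.147"
proof -
  define X where "X = Xpt t"
  define x where "x = Complex (- t) w_const"
  define r where "r = cmod X"
  have x0: "x \<noteq> 0" using w_facts(1) by (auto simp: x_def Complex_eq_0)
  have Xx: "X = 1 / x" by (simp add: X_def x_def Xpt_def)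
  have e1: "X + of_real q * X^2 = X^2 * (x + of_real q)"
    using x0 by (simp add: Xx field_simps power2_eq_square)
  have "cmod (x + of_real q) \<ge> w_const"
    using abs_Im_le_cmod[of "x + of_real q"] w_facts(1) by (simp add: x_def)
  hence A: "cmod (X + of_real q * X^2) \<ge> w_const * r^2"
    unfolding e1 r_def by (simp add: norm_mult norm_power mult.commute mult_right_mono)
  have r0: "r \<ge> 0" by (simp add: r_def)
  have q0: "0 \<le> q" using assms by simp
  have B3: "cmod (of_real (q^3) * X^3) \<le> r^3"
    using power_le_one[of q 3] q0 assms(2) r0
    by (simp add: norm_mult norm_power r_def mult_left_le_one_le)
  have B4: "cmod (of_real (q^6) * X^4) \<le> r^4"
    using power_le_one[of q 6] q0 assms(2) r0
    by (simp add: norm_mult norm_power r_def mult_left_le_one_le)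
  have B5: "cmod (of_real (q^10) * X^5) \<le> r^5"
    using power_le_one[of q 10] q0 assms(2) r0
    by (simp add: norm_mult norm_power r_def mult_left_le_one_le)
  have G: "G5 q X = (X + of_real q * X^2) + (of_real (q^3) * X^3 + of_real (q^6) * X^4
            + of_real (q^10) * X^5)" by (simp add: G5_def algebra_simps)
  have T: "cmod (of_real (q^3) * X^3 + of_real (q^6) * X^4 + of_real (q^10) * X^5) \<le> r^3 + r^4 + r^5"
    using norm_triangle_le[OF add_mono[OF norm_triangle_le[OF add_mono[OF B3 B4]] B5]]
    by simp
  have "cmod (G5 q X) \<ge> cmod (X + of_real q * X^2) - cmod (of_real (q^3) * X^3 + of_real (q^6) * X^4 + of_real (q^10) * X^5)"
    unfolding G by (rule norm_diff_ineq)
  moreover have rb: "1/3 \<le> r" "r \<le> 0.4715" using r_facts[OF assms(3,4)] by (simp_all add: r_def X_def)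
  have "w_const * r^2 - r^3 - r^4 - r^5 > 0.147" by (rule poly_bound[OF rb w_facts(3)])
  ultimately show ?thesis using A T by (simp add: X_def)
qed

lemma Gstar_bound:
  assumes "0.6 \<le> q" "q \<le> 1" "0 \<le> t" "t \<le> w_const"
  shows "cmod (Gstar q (Xpt t)) < 0.0208"
proof -
  define X where "X = Xpt t"
  define r where "r = cmod X"
  have r0: "r \<ge> 0" by (simp add: r_def)
  have r1: "r \<le> 0.4715" "r\<^sup>2 = 1 / (t^2 + w_const^2)"
    using r_facts[OF assms(3,4)] by (simp_all add: r_def X_def)
  have rl1: "r < 1" using r1 by simp
  define f where "f = (\<lambda>n. of_real (q ^ (((n + 5) * (n + 6)) div 2)) * X ^ (n + 6))"
  have fb: "norm (f n) \<le> r^6 * r^n" for n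
  proof -
    have "q ^ (((n + 5) * (n + 6)) div 2) \<le> 1" using assms by (intro power_le_one) auto
    moreover have "q ^ (((n + 5) * (n + 6)) div 2) \<ge> 0" using assms by simp
    ultimately have "q ^ (((n + 5) * (n + 6)) div 2) * (r^6 * r^n) \<le> 1 * (r^6 * r^n)"
      using r0 by (intro mult_right_mono) auto
    moreover have "norm (f n) = q ^ (((n + 5) * (n + 6)) div 2) * (r^6 * r^n)"
      using assms by (simp add: f_def norm_mult norm_power r_def power_add mult.commute)
    ultimately show ?thesis by simp
  qed
  have gs: "summable (\<lambda>n. r^6 * r^n)" using r0 rl1
    by (intro summable_mult summable_geometric) auto
  have sn: "summable (\<lambda>n. norm (f n))"
    by (rule summable_comparison_test[OF _ gs]) (use fb in auto)
  have "norm (suminf f) \<le> (\<Sum>n. norm (f n))" by (rule summable_norm[OF sn])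
  also have "\<dots> \<le> (\<Sum>n. r^6 * r^n)" by (rule suminf_le[OF fb sn gs])
  also have "\<dots> = r^6 / (1 - r)"
    using suminf_mult[OF summable_geometric[of r], of "r^6"] suminf_geometric[of r] r0 rl1
    by simp
  also have "\<dots> < 0.0208"
  proof -
    have D: "t^2 + w_const^2 \<ge> 9/2" using w_facts(2) by simp
    have "1 / (t^2 + w_const^2) \<le> 2/9" using D by (simp add: divide_simps)
    hence "r^2 \<le> 2/9" using r1(2) by simp
    hence "(r^2)^3 \<le> (2/9)^3" using r0 by (intro power_mono) auto
    moreover have "(2/9::real)^3 = 8/729" by (simp add: power3_eq_cube)
    ultimately have "r^6 \<le> 8/729" by (simp add: power_mult[symmetric])
    moreover have "1 - r \<ge> 0.5285" using r1 by simp
    ultimately have "r^6 < 0.0208 * (1 - r)" by simp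
    thus ?thesis using rl1 by (simp add: divide_simps)
  qed
  finally show ?thesis by (simp add: Gstar_def f_def X_def)
qed

theorem lemma2:
  fixes q t :: real
  assumes "0.6 \<le> q" "q \<le> 1" "0 \<le> t" "t \<le> w_const"
  shows "cmod (Gstar q (Xpt t)) < 0.0208 \<and> cmod (G5 q (Xpt t)) > 0.147"
  using Gstar_bound[OF assms] G5_bound[OF assms] by simp

end
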